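(* Let $\mathcal O,K,k,\nu$ be as in the context. Let $D\in\mathcal O[X]$ have degree $4$, with leading coefficient a unit of $\mathcal O$ that is a square in $K$, such that the continued fraction of $\sqrt D$ over $K$ is not periodic and the reduction $\bar D\in k[X]$ is not a square. Let $\alpha_n$ be the complete quotients of $\sqrt D$ over $K$. Then the continued fraction of $\sqrt D$ has bad reduction at $\nu$ (i.e. $\alpha_n\notin\mathcal O((X^{-1}))$ for some $n\ge1$) if and only if the continued fraction of $\sqrt{\bar D}=\overline{\sqrt D}$ over $k$ is periodic.
   Context: $\mathcal O$ is a discrete valuation ring with fraction field $K$, valuation $\nu$, residue field $k$ of characteristic $\ne2$; bars denote coefficientwise reduction. The square root $\sqrt D\in K((X^{-1}))$ then has coefficients in $\mathcal O$ and reduces to a square root of $\bar D$. $\mathcal O((X^{-1}))$ denotes Laurent series $\sum_{n\le N}u_nX^n$ with all $u_n\in\mathcal O$; $\operatorname{ord}(\sum_{n\le N}u_nX^n)=-N$ if $u_N\ne0$; $\lfloor\beta\rfloor$ is the unique polynomial with $\operatorname{ord}(\beta-\lfloor\beta\rfloor)>0$. Continued fraction: $\alpha_0=\alpha$, $\alpha_{n+1}=1/(\alpha_n-\lfloor\alpha_n\rfloor)$, $a_n=\lfloor\alpha_n\rfloor$; periodic: $a_n=a_{n+l}$ for all $n\ge m$, for some $m\ge0,l\ge1$. *)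

theory Defs
  imports "HOL-Computational_Algebra.Computational_Algebra"
begin

text \<open>Laurent series in X^{-1} are modelled as formal Laurent series in the
variable T = X^{-1} (type 'a fls). A series sum over n at most N of u_n X^n
is the fls with coefficient u_n at T^(-n). Thus "ord" of the paper is
fls_subdegree, and polynomials in X are the fls supported on nonpositive
T-exponents.\<close>

definition poly_to_fls_Xinv :: "'a::field poly \<Rightarrow> 'a fls" where
  "poly_to_fls_Xinv p = (\<Sum>i\<le>degree p. fls_const (coeff p i) * fls_X_inv ^ i)"

text \<open>Polynomial part: the unique polynomial with ord(beta - floor beta) > 0,
i.e. keep the terms X^n with n \<ge> 0 (T-exponent \<le> 0).\<close>
lift_definition fls_floor :: "'a::zero fls \<Rightarrow> 'a fls" is
  "\<lambda>f n. if n \<le> 0 then f n else 0"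
  by (auto elim: eventually_mono)

primrec cf_alpha :: "'a::field fls \<Rightarrow> nat \<Rightarrow> 'a fls" where
  "cf_alpha \<alpha> 0 = \<alpha>"
| "cf_alpha \<alpha> (Suc n) = inverse (cf_alpha \<alpha> n - fls_floor (cf_alpha \<alpha> n))"

definition cf_quot :: "'a::field fls \<Rightarrow> nat \<Rightarrow> 'a fls" where
  "cf_quot \<alpha> n = fls_floor (cf_alpha \<alpha> n)"

definition cf_periodic :: "'a::field fls \<Rightarrow> bool" where
  "cf_periodic \<alpha> \<longleftrightarrow> (\<exists>m l. l \<ge> 1 \<and> (\<forall>n\<ge>m. cf_quot \<alpha> n = cf_quot \<alpha> (n + l)))"

text \<open>Discrete (normalised) valuation nu on the field K; the value of nu at 0 is irrelevant.\<close>
definition discrete_valuation :: "('a::field \<Rightarrow> int) \<Rightarrow> bool" where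
  "discrete_valuation \<nu> \<longleftrightarrow>
     (\<forall>x y. x \<noteq> 0 \<longrightarrow> y \<noteq> 0 \<longrightarrow> \<nu> (x * y) = \<nu> x + \<nu> y) \<and>
     (\<forall>x y. x \<noteq> 0 \<longrightarrow> y \<noteq> 0 \<longrightarrow> x + y \<noteq> 0 \<longrightarrow> \<nu> (x + y) \<ge> min (\<nu> x) (\<nu> y)) \<and>
     (\<exists>\<pi>. \<pi> \<noteq> 0 \<and> \<nu> \<pi> = 1)"

definition val_ring :: "('a::field \<Rightarrow> int) \<Rightarrow> 'a set" where
  "val_ring \<nu> = {x. x = 0 \<or> \<nu> x \<ge> 0}"

text \<open>red is a reduction map: a surjective ring homomorphism from O onto the
field k whose kernel is the maximal ideal {x. x = 0 or nu x > 0};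
so k is (isomorphic to) the residue field O/m.\<close>
definition residue_map :: "('a::field \<Rightarrow> int) \<Rightarrow> ('a \<Rightarrow> 'b::field) \<Rightarrow> bool" where
  "residue_map \<nu> red \<longleftrightarrow>
     (\<forall>x\<in>val_ring \<nu>. \<forall>y\<in>val_ring \<nu>. red (x + y) = red x + red y \<and> red (x * y) = red x * red y) \<and>
     red 1 = 1 \<and>
     (\<forall>x\<in>val_ring \<nu>. red x = 0 \<longleftrightarrow> (x = 0 \<or> \<nu> x > 0)) \<and>
     (\<forall>c. \<exists>x\<in>val_ring \<nu>. red x = c)"

definition fls_over :: "'a set \<Rightarrow> 'a::zero fls \<Rightarrow> bool" where
  "fls_over R f \<longleftrightarrow> (\<forall>n. fls_nth f n \<in> R)"

text \<open>Coefficientwise reduction of a Laurent series (zero coefficients are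
mapped to zero; for a ring homomorphism this is just coefficientwise application).\<close>
lift_definition fls_reduce :: "('a::zero \<Rightarrow> 'b::zero) \<Rightarrow> 'a fls \<Rightarrow> 'b fls" is
  "\<lambda>h f n. if f n = 0 then 0 else h (f n)"
  by (auto elim: eventually_mono)

end

theory Submission
  imports Defs
begin

notation fls_nth (infixl \<open>$$\<close> 75)


abbreviation emb :: "'a::field poly \<Rightarrow> 'a fls" where "emb \<equiv> poly_to_fls_Xinv"

lemma emb_nth: "emb p $$ n = (if n \<le> 0 then coeff p (nat (-n)) else 0)"
proof -
  have "emb p $$ n = (\<Sum>i\<le>degree p. coeff p i * (if n = - int i then 1 else 0))"
    unfolding poly_to_fls_Xinv_def fls_nth_sum by simp
  also have "\<dots> = (\<Sum>i\<in>{i. i\<le>degree p \<and> n = - int i}. coeff p i)"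
  proof -
    have e: "{i. i\<le>degree p \<and> n = - int i} = {i\<in>{..degree p}. n = - int i}" by auto
    have "(\<Sum>i\<le>degree p. coeff p i * (if n = - int i then 1 else 0)) =
          (\<Sum>i\<le>degree p. if n = - int i then coeff p i else 0)" by (rule sum.cong) auto
    also have "\<dots> = sum (coeff p) {i\<in>{..degree p}. n = - int i}"
      by (rule sum.inter_filter[symmetric]) simp
    finally show ?thesis unfolding e .
  qed
  also have "\<dots> = (if n \<le> 0 then coeff p (nat (-n)) else 0)"
  proof (cases "n \<le> 0")
    case True
    show ?thesis
    proof (cases "nat (-n) \<le> degree p")
      case True2: True
      have "{i. i\<le>degree p \<and> n = - int i} = {nat (-n)}" using True True2 by auto
      thus ?thesis using True by simp
    next
      case False
      have e: "{i. i\<le>degree p \<and> n = - int i} = {}" using True False by auto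
      show ?thesis unfolding e using True False by (simp add: coeff_eq_0)
    qed
  next
    case False
    have e: "{i. i\<le>degree p \<and> n = - int i} = {}" using False by auto
    show ?thesis unfolding e using False by simp
  qed
  finally show ?thesis .
qed

lemma emb_pCons: "emb (pCons a p) = fls_const a + fls_X_inv * emb p"
  by (rule fls_eqI) (auto simp: emb_nth fls_X_inv_times_conv_shift coeff_pCons nat_add_distrib
       split: nat.splits intro!: arg_cong[where f="coeff p"])

lemma emb_0 [simp]: "emb 0 = 0"
  by (rule fls_eqI) (simp add: emb_nth)

lemma emb_const: "emb [:c:] = fls_const c"
  by (rule fls_eqI) (auto simp: emb_nth coeff_pCons split: nat.splits)

lemma emb_add: "emb (p + q) = emb p + emb q"
  by (rule fls_eqI) (simp add: emb_nth)

lemma emb_diff: "emb (p - q) = emb p - emb q"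
  by (rule fls_eqI) (simp add: emb_nth)

lemma emb_uminus: "emb (- p) = - emb p"
  by (rule fls_eqI) (simp add: emb_nth)

lemma emb_smult: "emb (smult c p) = fls_const c * emb p"
  by (rule fls_eqI) (simp add: emb_nth)

lemma emb_mult: "emb (p * q) = emb p * emb q"
proof (induction p)
  case 0 show ?case by simp
next
  case (pCons a p)
  have "pCons a p * q = smult a q + pCons 0 (p * q)" by simp
  hence "emb (pCons a p * q) = fls_const a * emb q + fls_X_inv * emb (p*q)"
    by (simp only: emb_add emb_smult emb_pCons) simp
  also have "\<dots> = emb (pCons a p) * emb q"
    using pCons by (simp add: emb_pCons algebra_simps)
  finally show ?case .
qed

lemma emb_1 [simp]: "emb 1 = 1"
  using emb_const[of 1] by (simp add: one_pCons)

lemma emb_power: "emb (p ^ n) = emb p ^ n"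
  by (induction n) (simp_all add: emb_mult)

lemma emb_inj: "emb p = emb q \<Longrightarrow> p = q"
proof -
  assume "emb p = emb q"
  hence "\<And>i. emb p $$ (- int i) = emb q $$ (- int i)" by simp
  hence "\<And>i. coeff p i = coeff q i" by (simp add: emb_nth)
  thus ?thesis by (simp add: poly_eq_iff)
qed

lemma emb_eq_0_iff [simp]: "emb p = 0 \<longleftrightarrow> p = 0"
  using emb_inj[of p 0] by auto

lemma emb_subdegree: "p \<noteq> 0 \<Longrightarrow> fls_subdegree (emb p) = - int (degree p)"
  by (rule fls_subdegree_eqI) (auto simp: emb_nth coeff_eq_0)

definition is_pol :: "'a::zero fls \<Rightarrow> bool" where
  "is_pol f \<longleftrightarrow> (\<forall>n>0. f $$ n = 0)"

lemma is_pol_emb: "is_pol (emb p)" by (simp add: is_pol_def emb_nth)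

lemma is_pol_ex: 
  fixes f :: "'a::field fls"
  assumes "is_pol f" shows "\<exists>p. f = emb p"
proof -
  obtain N :: nat where N: "\<forall>n>N. f $$ (- int n) = 0" by (rule fls_nth_vanishes_below_natE)
  define p where "p = Abs_poly (\<lambda>i. f $$ (- int i))"
  have "\<forall>\<^sub>\<infinity> i. f $$ (- int i) = 0" unfolding MOST_nat using N by blast
  hence cp: "coeff p i = f $$ (- int i)" for i unfolding p_def by (simp add: Abs_poly_inverse)
  have "f = emb p"
    by (rule fls_eqI) (use assms in \<open>auto simp: emb_nth cp is_pol_def\<close>)
  thus ?thesis by blast
qed



lemma floor_nth: "fls_floor f $$ n = (if n \<le> 0 then f $$ n else 0)"
  by transfer simp

lemma floor_add: "fls_floor (f + g) = fls_floor f + fls_floor (g :: 'a::monoid_add fls)"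
  by (rule fls_eqI) (simp add: floor_nth)

lemma floor_diff: "fls_floor (f - g) = fls_floor f - fls_floor (g :: 'a::group_add fls)"
  by (rule fls_eqI) (simp add: floor_nth)

lemma floor_uminus: "fls_floor (- g) = - fls_floor (g :: 'a::group_add fls)"
  by (rule fls_eqI) (simp add: floor_nth)

lemma floor_pol: "is_pol f \<Longrightarrow> fls_floor f = f"
  by (rule fls_eqI) (simp add: floor_nth is_pol_def)

lemma pol_floor: "is_pol (fls_floor f)"
  by (simp add: floor_nth is_pol_def)

lemma floor_floor: "fls_floor (fls_floor f) = fls_floor f"
  by (rule floor_pol[OF pol_floor])

lemma floor_emb: "fls_floor (emb p) = emb p"
  by (rule floor_pol[OF is_pol_emb])

lemma frac_small: "n \<le> 0 \<Longrightarrow> (f - fls_floor f) $$ n = (0::'a::group_add)"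
  by (simp add: floor_nth)

lemma floor_zero_iff: "fls_floor f = 0 \<longleftrightarrow> (\<forall>n\<le>0. f $$ n = 0)"
  by (auto simp: fls_eq_iff floor_nth)

lemma floor_small_nth: "fls_floor f = 0 \<Longrightarrow> n \<le> 0 \<Longrightarrow> f $$ n = 0"
  by (auto simp: floor_zero_iff)

lemma is_pol_add: "is_pol f \<Longrightarrow> is_pol g \<Longrightarrow> is_pol (f + g)"
  by (simp add: is_pol_def)

lemma small_subdeg: "f \<noteq> 0 \<Longrightarrow> (\<forall>n\<le>0. f $$ n = 0) \<Longrightarrow> fls_subdegree f \<ge> 1"
  using fls_subdegree_geI[of f 1] by auto

lemma inv_of_small:
  fixes g :: "'a::field fls"
  assumes "g \<noteq> 0" "\<forall>n\<le>0. g $$ n = 0"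
  shows "inverse g \<noteq> 0" "fls_subdegree (inverse g) \<le> -1"
  using assms small_subdeg[OF assms] by auto

lemma inv_small:
  fixes g :: "'a::field fls"
  assumes "g $$ k \<noteq> 0" "k \<le> -1"
  shows "inverse g \<noteq> 0" "\<forall>j\<le>0. inverse g $$ j = 0"
proof -
  have g: "g \<noteq> 0" using assms by auto
  have "fls_subdegree g \<le> k" using assms(1) by (rule fls_subdegree_leI)
  hence "fls_subdegree (inverse g) \<ge> 1" using assms by simp
  thus "inverse g \<noteq> 0" "\<forall>j\<le>0. inverse g $$ j = 0" using g by auto
qed

primrec cf_conj :: "'a::field fls \<Rightarrow> nat \<Rightarrow> 'a fls" where
  "cf_conj s 0 = - s"
| "cf_conj s (Suc n) = inverse (cf_conj s n - fls_floor (cf_alpha s n))"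

lemma inv_back: "x' = inverse (x - b) \<Longrightarrow> x = b + inverse (x' :: 'a::field fls)"
  by simp

locale sqcf =
  fixes D :: "'a::field poly" and s :: "'a fls"
  assumes two: "(2::'a) \<noteq> 0"
    and sq: "s ^ 2 = emb D"
    and deg: "degree D = 4"
    and nsq: "\<not> (\<exists>q. D = q ^ 2)"
begin

abbreviation "\<alpha> \<equiv> cf_alpha s"
abbreviation "\<beta> \<equiv> cf_conj s"
abbreviation "a n \<equiv> fls_floor (cf_alpha s n)"
abbreviation "A \<equiv> fls_floor s"

lemma D_nz: "D \<noteq> 0" using deg by auto

lemma s_nz: "s \<noteq> 0" using sq D_nz by auto

lemma s_sub: "fls_subdegree s = -2"
proof -
  have "fls_subdegree (s^2) = -4" using sq D_nz by (simp add: emb_subdegree deg)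
  thus ?thesis by (simp add: fls_subdegree_pow)
qed

lemma s_lead: "s $$ (-2) \<noteq> 0"
  using s_nz s_sub nth_fls_subdegree_nonzero by fastforce

lemma s_low: "k < -2 \<Longrightarrow> s $$ k = 0"
  using s_sub by simp

lemma s_not_pol: "s \<noteq> emb p"
proof
  assume "s = emb p"
  hence "emb D = emb (p^2)" using sq by (simp add: emb_power)
  hence "D = p^2" by (rule emb_inj)
  thus False using nsq by blast
qed

lemma s_not_rat: "q \<noteq> 0 \<Longrightarrow> s * emb q \<noteq> emb p"
proof
  assume q: "q \<noteq> 0" and e: "s * emb q = emb p"
  define I where "I = {q. q \<noteq> 0 \<and> is_pol (s * emb q)}"
  have "q \<in> I" using q e is_pol_emb[of p] by (simp add: I_def)
  hence "\<exists>n. \<exists>q\<in>I. degree q = n" by blast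
  then obtain n where n: "\<exists>q\<in>I. degree q = n" and nmin: "\<And>m. m < n \<Longrightarrow> \<not> (\<exists>q\<in>I. degree q = m)"
    using exists_least_iff[of "\<lambda>n. \<exists>q\<in>I. degree q = n"] by blast
  then obtain q0 where q0: "q0 \<in> I" "degree q0 = n" by blast
  obtain p0 where p0: "s * emb q0 = emb p0" using q0(1) is_pol_ex unfolding I_def by blast
  have q0nz: "q0 \<noteq> 0" using q0 by (simp add: I_def)
  have modI: "x mod q0 = 0" if hx: "is_pol (s * emb x)" for x
  proof (rule ccontr)
    assume nz: "x mod q0 \<noteq> 0"
    obtain px where px: "s * emb x = emb px" using hx is_pol_ex by blast
    have "x = q0 * (x div q0) + x mod q0" by simp
    hence "s * emb (x mod q0) = s * emb x - s * emb q0 * emb (x div q0)"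
      by (metis add_diff_cancel_left' emb_diff emb_mult mult.assoc right_diff_distrib)
    also have "\<dots> = emb (px - p0 * (x div q0))" by (simp add: px p0 emb_diff emb_mult)
    finally have "x mod q0 \<in> I" using nz is_pol_emb by (simp add: I_def)
    moreover have "degree (x mod q0) < n" using degree_mod_less[OF q0nz, of x] nz q0 by simp
    ultimately show False using nmin by blast
  qed
  have "s * emb p0 = emb (D * q0)" using p0 sq
    by (metis emb_mult mult.assoc mult.commute power2_eq_square)
  hence "p0 mod q0 = 0" using modI is_pol_emb by metis
  then obtain c where c: "p0 = q0 * c" by (metis mod_0_imp_dvd dvdE)
  have "emb q0 * (s - emb c) = 0" using p0 c by (simp add: emb_mult algebra_simps)
  hence "s = emb c" using q0nz by simp
  thus False using s_not_pol by blast
qed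

lemma s_plus_nz: "s + emb p \<noteq> 0" "s - emb p \<noteq> 0"
  using s_not_pol[of "-p"] s_not_pol[of p] by (auto simp: emb_uminus eq_neg_iff_add_eq_0 )

lemma floor_ex: "\<exists>b. fls_floor f = emb b"
  using is_pol_ex[OF pol_floor] by blast

lemma rep: "\<exists>P Q. Q \<noteq> 0 \<and> Q dvd (D - P^2) \<and> \<alpha> n = (emb P + s) / emb Q \<and> \<beta> n = (emb P - s) / emb Q"
proof (induction n)
  case 0
  show ?case by (rule exI[of _ 0], rule exI[of _ 1]) simp
next
  case (Suc n)
  then obtain P Q where Q: "Q \<noteq> 0" "Q dvd (D - P^2)" and al: "\<alpha> n = (emb P + s) / emb Q"
    and be: "\<beta> n = (emb P - s) / emb Q" by blast
  obtain b where b: "a n = emb b" using floor_ex by blast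
  define P1 where "P1 = b * Q - P"
  have eq: "D - P1^2 = (D - P^2) - Q * (b^2 * Q - 2 * b * P)"
    unfolding P1_def by (simp add: power2_eq_square algebra_simps)
  have dv: "Q dvd D - P1^2" unfolding eq by (rule dvd_diff[OF Q(2)]) simp
  define Q1 where "Q1 = (D - P1^2) div Q"
  have QQ1: "Q * Q1 = D - P1^2" unfolding Q1_def using dv by simp
  have Q1: "Q1 \<noteq> 0" using QQ1 nsq by auto
  have dv1: "Q1 dvd D - P1^2" using QQ1 by (metis dvd_triv_right)
  have EQ: "emb Q \<noteq> 0" "emb Q1 \<noteq> 0" using Q Q1 by auto
  have key: "emb Q * emb Q1 = (s - emb P1) * (s + emb P1)"
    using arg_cong[OF QQ1, of emb] by (simp add: emb_mult emb_diff emb_power sq[symmetric] power2_eq_square algebra_simps)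
  have P1e: "emb P1 = emb b * emb Q - emb P" by (simp add: P1_def emb_mult emb_diff)
  have d1: "\<alpha> n - a n = (s - emb P1) / emb Q"
  proof -
    have "\<alpha> n - a n = \<alpha> n - emb b" by (simp only: b)
    also have "\<dots> = (s - emb P1) / emb Q" using EQ by (simp add: al P1e field_simps)
    finally show ?thesis .
  qed
  have d2: "\<beta> n - a n = - (s + emb P1) / emb Q"
  proof -
    have "\<beta> n - a n = \<beta> n - emb b" by (simp only: b)
    also have "\<dots> = - (s + emb P1) / emb Q" using EQ by (simp add: be P1e field_simps)
    finally show ?thesis .
  qed
  have nz1: "s - emb P1 \<noteq> 0" by (rule s_plus_nz(2))
  have nz2: "s + emb P1 \<noteq> 0" by (rule s_plus_nz(1))
  have "- s - emb P1 = - (s + emb P1)" by (simp only: minus_add_distrib diff_conv_add_uminus)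
  hence nz3: "- s - emb P1 \<noteq> 0" using nz2 by (metis neg_equal_0_iff_equal)
  note nz = nz1 nz2 nz3
  have "\<alpha> (Suc n) = inverse ((s - emb P1) / emb Q)" using d1 by simp
  also have "\<dots> = emb Q / (s - emb P1)" by (simp add: inverse_divide)
  also have "\<dots> = (emb P1 + s) / emb Q1"
    using EQ nz key by (simp add: frac_eq_eq algebra_simps)
  finally have A1: "\<alpha> (Suc n) = (emb P1 + s) / emb Q1" .
  have "\<beta> (Suc n) = inverse (- (s + emb P1) / emb Q)" using d2 by simp
  also have "\<dots> = emb Q / (- (s + emb P1))" by (simp add: inverse_divide)
  also have "\<dots> = (emb P1 - s) / emb Q1"
    using EQ nz key by (simp add: frac_eq_eq algebra_simps)
  finally have B1: "\<beta> (Suc n) = (emb P1 - s) / emb Q1" .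
  show ?case using Q1 dv1 A1 B1 by blast
qed

end


context sqcf begin

lemma alpha_Suc: "\<alpha> (Suc n) = inverse (\<alpha> n - a n)" by simp
lemma beta_Suc: "\<beta> (Suc n) = inverse (\<beta> n - a n)" by simp

lemma frac_nz: "\<alpha> n - a n \<noteq> 0"
proof
  assume h: "\<alpha> n - a n = 0"
  obtain P Q where Q: "Q \<noteq> 0" and al: "\<alpha> n = (emb P + s) / emb Q" using rep by blast
  obtain b where b: "a n = emb b" using floor_ex by blast
  have "\<alpha> n = emb b" using h b by simp
  hence "emb P + s = emb b * emb Q" using Q al by (simp add: divide_eq_eq)
  hence "s = emb (b * Q - P)" by (simp add: emb_mult emb_diff algebra_simps)
  thus False using s_not_pol by blast
qed

lemma alpha_props: "n \<ge> 1 \<Longrightarrow> \<alpha> n \<noteq> 0 \<and> fls_subdegree (\<alpha> n) \<le> -1"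
proof -
  assume "n \<ge> 1"
  then obtain m where m: "n = Suc m" by (cases n) auto
  have "\<alpha> n = inverse (\<alpha> m - a m)" using m by simp
  thus ?thesis using inv_of_small[OF frac_nz[of m]] frac_small[of _ "\<alpha> m"] by auto
qed

lemma alpha_lead: "n \<ge> 1 \<Longrightarrow> \<alpha> n $$ fls_subdegree (\<alpha> n) \<noteq> 0"
  using alpha_props by auto

lemma a_lead: "n \<ge> 1 \<Longrightarrow> a n $$ fls_subdegree (\<alpha> n) = \<alpha> n $$ fls_subdegree (\<alpha> n)"
proof -
  assume "n \<ge> 1" thus ?thesis using alpha_props[of n] by (simp add: floor_nth)
qed

lemma two_ne: "x \<noteq> 0 \<Longrightarrow> - x - x \<noteq> (0::'a)"
proof
  assume "x \<noteq> 0" "- x - x = 0"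
  hence "2 * x = 0" by (simp add: algebra_simps)
  thus False using two \<open>x \<noteq> 0\<close> by simp
qed

lemma beta_props: "n \<ge> 1 \<Longrightarrow> \<beta> n \<noteq> 0 \<and> (\<forall>k\<le>0. \<beta> n $$ k = 0)"
proof (induction n rule: dec_induct)
  case base
  have "\<beta> 1 = inverse (- s - A)" by simp
  moreover have "(- s - A) $$ (-2) \<noteq> 0" using two_ne[OF s_lead] by (simp add: floor_nth)
  ultimately show ?case using inv_small[of "- s - A" "-2"] by simp
next
  case (step n)
  define k where "k = fls_subdegree (\<alpha> n)"
  have k: "k \<le> -1" using alpha_props[OF step(1)] k_def by simp
  have "(\<beta> n - a n) $$ k \<noteq> 0"
    using step k a_lead[OF step(1)] alpha_lead[OF step(1)] by (simp add: k_def)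
  hence "inverse (\<beta> n - a n) \<noteq> 0 \<and> (\<forall>j\<le>0. inverse (\<beta> n - a n) $$ j = 0)"
    using inv_small[OF _ k] by blast
  thus ?case by simp
qed

lemma floor_beta: "n \<ge> 1 \<Longrightarrow> fls_floor (\<beta> n) = 0"
  using beta_props by (simp add: floor_zero_iff)

lemma beta_back: "\<beta> n = a n + inverse (\<beta> (Suc n))" by simp
lemma alpha_back: "\<alpha> n = a n + inverse (\<alpha> (Suc n))" by simp

lemma floor_s_plus: "fls_floor (s + A) = A + A"
  by (simp add: floor_add floor_floor)

end


context sqcf begin

lemma big_periodic:
  assumes n: "n \<ge> 1" and big: "fls_subdegree (\<alpha> n) \<le> -2"
  shows "cf_periodic s"
proof -
  obtain P Q where Q: "Q \<noteq> 0" and al: "\<alpha> n = (emb P + s) / emb Q"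
    and be: "\<beta> n = (emb P - s) / emb Q" using rep by blast
  define k0 where "k0 = fls_subdegree (\<alpha> n)"
  have EQ: "emb Q \<noteq> 0" using Q by simp
  have "(\<alpha> n - \<beta> n) $$ k0 \<noteq> 0"
    using alpha_lead[OF n] beta_props[OF n] big by (simp add: k0_def)
  hence dnz: "\<alpha> n - \<beta> n \<noteq> 0" and dsub: "fls_subdegree (\<alpha> n - \<beta> n) \<le> -2"
    using fls_subdegree_leI[of "\<alpha> n - \<beta> n" k0] big k0_def by auto
  have "(\<alpha> n - \<beta> n) * emb Q = fls_const 2 * s"
    using EQ by (simp add: al be field_simps)
  moreover have t2: "(2::'a fls) \<noteq> 0" using two by (metis fls_const_numeral fls_const_eq_0_iff)
  ultimately have "fls_subdegree ((\<alpha> n - \<beta> n) * emb Q) = -2"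
    using s_sub s_nz by simp
  hence "fls_subdegree (\<alpha> n - \<beta> n) - int (degree Q) = -2"
    using dnz EQ Q by (simp add: emb_subdegree)
  hence dQ: "degree Q = 0" using dsub by simp
  define q where "q = coeff Q 0"
  have Qq: "Q = [:q:]" using degree_0_id[OF dQ] q_def by simp
  have q: "q \<noteq> 0" using Q Qq by simp
  have EQq: "emb Q = fls_const q" using Qq emb_const by simp
  have c2: "fls_const (2 / q) = 2 / fls_const q"
    by (simp add: divide_inverse fls_inverse_const[symmetric] fls_const_mult_const[symmetric]
        del: fls_const_mult_const)
  have "\<alpha> n + \<beta> n = emb (smult (2/q) P)"
    using EQ by (simp add: al be emb_smult c2 EQq field_simps)
  hence "fls_floor (\<alpha> n + \<beta> n) = \<alpha> n + \<beta> n" by (simp add: floor_emb)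
  hence "a n = \<alpha> n + \<beta> n" using floor_beta[OF n] by (simp add: floor_add)
  hence bn: "\<beta> n - a n = - \<alpha> n" by simp
  define \<delta> where "\<delta> j = - inverse (\<beta> j)" for j
  have dstep: "\<delta> (Suc j) = a j + inverse (\<delta> j)" for j
    by (simp add: \<delta>_def)
  have dfloor: "fls_floor (\<delta> (Suc j)) = a j" if "j \<ge> 1" for j
    using floor_beta[OF that] by (simp add: \<delta>_def floor_diff floor_floor)
  have dn: "\<delta> (Suc n) = \<alpha> n" by (simp add: \<delta>_def bn)
  have d1: "\<delta> 1 = A + s" by (simp add: \<delta>_def)
  have claim: "i \<le> n \<Longrightarrow> \<alpha> (n + i) = \<delta> (Suc n - i)" for i
  proof (induction i)
    case 0 show ?case using dn by simp
  next
    case (Suc i)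
    hence IH: "\<alpha> (n + i) = \<delta> (Suc (n - i))" by (simp add: Suc_diff_le)
    have ge: "n - i \<ge> 1" using Suc.prems by simp
    have "a (n + i) = a (n - i)" using IH dfloor[OF ge] by simp
    hence "\<alpha> (n + i) - a (n + i) = inverse (\<delta> (n - i))" using IH dstep[of "n - i"] by simp
    hence "\<alpha> (n + Suc i) = \<delta> (n - i)" by simp
    thus ?case using Suc.prems by (simp add: Suc_diff_Suc)
  qed
  have a2n: "\<alpha> (n + n) = A + s" using claim[of n] d1 by simp
  have a2n1: "\<alpha> (Suc (n + n)) = \<alpha> 1"
    using a2n by (simp add: floor_add floor_floor)
  have per: "\<alpha> (Suc (n + n) + j) = \<alpha> (Suc j)" for j
  proof (induction j)
    case 0 show ?case using a2n1 by simp
  next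
    case (Suc j)
    have "\<alpha> (Suc (n + n) + Suc j) = inverse (\<alpha> (Suc (n + n) + j) - a (Suc (n + n) + j))" by simp
    thus ?case using Suc by simp
  qed
  have "\<forall>t\<ge>1. cf_quot s t = cf_quot s (t + (n + n))"
  proof (intro allI impI)
    fix t :: nat assume "1 \<le> t"
    then obtain j where t: "t = Suc j" by (cases t) auto
    have e: "t + (n + n) = Suc (n + n) + j" using t by simp
    show "cf_quot s t = cf_quot s (t + (n + n))" unfolding cf_quot_def e by (simp only: per t)
  qed
  moreover have "1 \<le> n + n" using n by simp
  ultimately show ?thesis unfolding cf_periodic_def by blast
qed

end


context sqcf begin

lemma conj_unique:
  assumes Q1: "Q1 \<noteq> 0" and Q2: "Q2 \<noteq> 0"
    and e: "(emb P1 + s) / emb Q1 = (emb P2 + s) / emb Q2"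
  shows "(emb P1 - s) / emb Q1 = (emb P2 - s) / emb Q2"
proof -
  have E: "emb Q1 \<noteq> 0" "emb Q2 \<noteq> 0" using Q1 Q2 by auto
  have c: "(emb P1 + s) * emb Q2 = (emb P2 + s) * emb Q1" using e E by (simp add: frac_eq_eq)
  hence "s * emb (Q2 - Q1) = emb (P2 * Q1 - P1 * Q2)"
    by (simp add: emb_diff emb_mult algebra_simps)
  hence "Q2 = Q1" using s_not_rat[of "Q2 - Q1"] by auto
  hence "emb P1 = emb P2" using e E by simp
  thus ?thesis using \<open>Q2 = Q1\<close> by simp
qed

lemma alpha_eq_beta_eq: "\<alpha> i = \<alpha> j \<Longrightarrow> \<beta> i = \<beta> j"
proof -
  assume h: "\<alpha> i = \<alpha> j"
  obtain P1 Q1 where 1: "Q1 \<noteq> 0" "\<alpha> i = (emb P1 + s) / emb Q1" "\<beta> i = (emb P1 - s) / emb Q1"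
    using rep by blast
  obtain P2 Q2 where 2: "Q2 \<noteq> 0" "\<alpha> j = (emb P2 + s) / emb Q2" "\<beta> j = (emb P2 - s) / emb Q2"
    using rep by blast
  show ?thesis using conj_unique[OF 1(1) 2(1)] 1 2 h by simp
qed

lemma a_from_beta: "j \<ge> 1 \<Longrightarrow> a j = fls_floor (- inverse (\<beta> (Suc j)))"
proof -
  assume j: "j \<ge> 1"
  have "- inverse (\<beta> (Suc j)) = a j - \<beta> j" by simp
  thus ?thesis using floor_beta[OF j] by (simp add: floor_diff floor_floor)
qed

lemma periodic_big:
  assumes "cf_periodic s" shows "\<exists>n\<ge>1. fls_subdegree (\<alpha> n) \<le> -2"
proof -
  obtain m l where l: "l \<ge> 1" and per0: "\<forall>t\<ge>m. cf_quot s t = cf_quot s (t + l)"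
    using assms unfolding cf_periodic_def by blast
  define M where "M = Suc m"
  have M1: "M \<ge> 1" by (simp add: M_def)
  define x where "x j = \<alpha> (M + j)" for j
  define y where "y j = \<alpha> (M + l + j)" for j
  have aeq: "a (M + j) = a (M + l + j)" for j
    using per0[rule_format, of "M + j"] by (simp add: M_def cf_quot_def add.commute add.left_commute)
  have xp: "x j \<noteq> 0 \<and> fls_subdegree (x j) \<le> -1" for j
    unfolding x_def using alpha_props[of "M + j"] M1 by simp
  have yp: "y j \<noteq> 0 \<and> fls_subdegree (y j) \<le> -1" for j
    unfolding y_def using alpha_props[of "M + l + j"] M1 by simp
  have xb: "x j = a (M + j) + inverse (x (Suc j))" for j
    unfolding x_def using alpha_back[of "M + j"] by simp
  have yb: "y j = a (M + j) + inverse (y (Suc j))" for j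
    unfolding y_def using alpha_back[of "M + l + j"] aeq[of j] by simp
  have claim: "\<forall>j. x j \<noteq> y j \<longrightarrow> fls_subdegree (x j - y j) \<ge> int N" for N
  proof (induction N)
    case 0
    show ?case
    proof (intro allI impI)
      fix j assume ne: "x j \<noteq> y j"
      have "\<forall>k\<le>0. (x j - y j) $$ k = 0"
      proof (intro allI impI)
        fix k :: int assume k: "k \<le> 0"
        have "a (M+j) $$ k = a (M+l+j) $$ k" using aeq[of j] by simp
        thus "(x j - y j) $$ k = 0" using k by (simp add: floor_nth x_def y_def)
      qed
      thus "fls_subdegree (x j - y j) \<ge> int 0" using small_subdeg[of "x j - y j"] ne by simp
    qed
  next
    case (Suc N)
    show ?case
    proof (intro allI impI)
      fix j assume ne: "x j \<noteq> y j"
      have ne': "x (Suc j) \<noteq> y (Suc j)" using ne xb[of j] yb[of j] by auto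
      have "x j - y j = inverse (x (Suc j)) - inverse (y (Suc j))"
        by (subst xb[of j], subst yb[of j]) simp
      also have "\<dots> = (y (Suc j) - x (Suc j)) * (inverse (x (Suc j)) * inverse (y (Suc j)))"
        using xp[of "Suc j"] yp[of "Suc j"] by (simp add: field_simps)
      finally have "x j - y j = (y (Suc j) - x (Suc j)) * (inverse (x (Suc j)) * inverse (y (Suc j)))" .
      moreover have "y (Suc j) - x (Suc j) \<noteq> 0" using ne' by simp
      ultimately have "fls_subdegree (x j - y j) =
          fls_subdegree (y (Suc j) - x (Suc j)) - fls_subdegree (x (Suc j)) - fls_subdegree (y (Suc j))"
        using xp[of "Suc j"] yp[of "Suc j"] by simp
      moreover have "fls_subdegree (y (Suc j) - x (Suc j)) \<ge> int N"
        using Suc.IH ne' by (simp add: fls_subdegree_minus_sym)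
      ultimately show "fls_subdegree (x j - y j) \<ge> int (Suc N)"
        using xp[of "Suc j"] yp[of "Suc j"] by simp
    qed
  qed
  have "x 0 = y 0"
  proof (rule ccontr)
    assume ne: "x 0 \<noteq> y 0"
    have "fls_subdegree (x 0 - y 0) \<ge> int (nat (fls_subdegree (x 0 - y 0)) + 1)"
      using claim ne by blast
    thus False by (simp split: if_splits)
  qed
  hence eqM: "\<alpha> M = \<alpha> (M + l)" by (simp add: x_def y_def)
  have desc: "i < M \<Longrightarrow> \<alpha> (M - i) = \<alpha> (M - i + l) \<and> \<beta> (M - i) = \<beta> (M - i + l)" for i
  proof (induction i)
    case 0 show ?case using eqM alpha_eq_beta_eq[OF eqM] by simp
  next
    case (Suc i)
    define j where "j = M - Suc i"
    have j1: "j \<ge> 1" using Suc.prems by (simp add: j_def)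
    have Mi: "M - i = Suc j" using Suc.prems by (simp add: j_def)
    have IH: "\<alpha> (Suc j) = \<alpha> (Suc (j + l))" "\<beta> (Suc j) = \<beta> (Suc (j + l))"
      using Suc.IH Suc.prems Mi by auto
    have jl: "j + l \<ge> 1" using j1 by simp
    have "a j = fls_floor (- inverse (\<beta> (Suc (j + l))))"
      using a_from_beta[OF j1] IH(2) by (simp only:)
    also have "\<dots> = a (j + l)" using a_from_beta[OF jl] by (rule sym)
    finally have aj: "a j = a (j + l)" .
    have "\<alpha> j = a j + inverse (\<alpha> (Suc j))" by (rule alpha_back)
    also have "\<dots> = a (j+l) + inverse (\<alpha> (Suc (j+l)))" by (simp only: aj IH(1))
    also have "\<dots> = \<alpha> (j+l)" by (rule alpha_back[symmetric])
    finally have "\<alpha> j = \<alpha> (j + l)" .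
    moreover have "\<beta> j = a j + inverse (\<beta> (Suc j))" by (rule beta_back)
    moreover have "a j + inverse (\<beta> (Suc j)) = a (j+l) + inverse (\<beta> (Suc (j+l)))" by (simp only: aj IH(2))
    moreover have "a (j+l) + inverse (\<beta> (Suc (j+l))) = \<beta> (j+l)" by (rule beta_back[symmetric])
    ultimately have "\<alpha> j = \<alpha> (j + l) \<and> \<beta> j = \<beta> (j + l)" by simp
    thus ?case by (simp add: j_def)
  qed
  have "\<beta> 1 = \<beta> (1 + l)" using desc[of m] by (simp add: M_def)
  hence "\<beta> l = a l + inverse (\<beta> 1)" using beta_back[of l] by (simp only: Suc_eq_plus1_left)
  also have "inverse (\<beta> 1) = - s - A" by simp
  finally have "\<beta> l = a l - s - A" by simp
  hence "0 = a l - A - A" using floor_beta[OF l] by (simp add: floor_diff floor_floor)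
  hence al: "a l = A + A" by (simp add: algebra_simps)
  have "\<alpha> l $$ (-2) = a l $$ (-2)" by (simp add: floor_nth)
  also have "\<dots> = s $$ (-2) + s $$ (-2)" using al by (simp add: floor_nth)
  finally have "\<alpha> l $$ (-2) \<noteq> 0" using two_ne[OF s_lead] by (auto simp: algebra_simps)
  hence "fls_subdegree (\<alpha> l) \<le> -2" by (rule fls_subdegree_leI)
  thus ?thesis using l by blast
qed

lemma periodic_iff: "cf_periodic s \<longleftrightarrow> (\<exists>n\<ge>1. fls_subdegree (\<alpha> n) \<le> -2)"
  using periodic_big big_periodic by blast

end


lemma times_nth_gen:
  fixes f g :: "'a::comm_ring_1 fls"
  assumes fa: "\<forall>i<a. f $$ i = 0" and gb: "\<forall>i<b. g $$ i = 0"
  shows "(f * g) $$ n = (\<Sum>i=a..n - b. f $$ i * g $$ (n - i))"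
proof (cases "f = 0 \<or> g = 0")
  case True
  thus ?thesis by auto
next
  case False
  hence fz: "f \<noteq> 0" and gz: "g \<noteq> 0" by auto
  have a: "a \<le> fls_subdegree f" using fa nth_fls_subdegree_nonzero[OF fz] by (meson not_le)
  have b: "b \<le> fls_subdegree g" using gb nth_fls_subdegree_nonzero[OF gz] by (meson not_le)
  have "(f * g) $$ n = (\<Sum>i=fls_subdegree f..n - fls_subdegree g. f $$ i * g $$ (n - i))"
    by (rule fls_times_nth(2))
  also have "\<dots> = (\<Sum>i=a..n - b. f $$ i * g $$ (n - i))"
  proof (rule sum.mono_neutral_left)
    show "finite {a..n - b}" by simp
    show "{fls_subdegree f..n - fls_subdegree g} \<subseteq> {a..n - b}" using a b by auto
    show "\<forall>i\<in>{a..n - b} - {fls_subdegree f..n - fls_subdegree g}. f $$ i * g $$ (n - i) = 0"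
    proof
      fix i assume "i \<in> {a..n - b} - {fls_subdegree f..n - fls_subdegree g}"
      hence "i < fls_subdegree f \<or> n - i < fls_subdegree g" by auto
      thus "f $$ i * g $$ (n - i) = 0" by auto
    qed
  qed
  finally show ?thesis .
qed

lemma times_nth_nat:
  fixes f g :: "'a::comm_ring_1 fls"
  assumes fa: "\<forall>i<d. f $$ i = 0" and gb: "\<forall>i<a. g $$ i = 0"
  shows "(f * g) $$ (d + a + int j) = (\<Sum>t\<le>j. f $$ (d + int t) * g $$ (a + int (j - t)))"
proof -
  have "(f * g) $$ (d + a + int j) = (\<Sum>i=d..d + int j. f $$ i * g $$ (d + a + int j - i))"
    using times_nth_gen[OF fa gb, of "d + a + int j"] by simp
  also have "\<dots> = (\<Sum>t\<in>{..j}. f $$ (d + int t) * g $$ (d + a + int j - (d + int t)))"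
  proof (rule sum.reindex_bij_witness[of _ "\<lambda>t. d + int t" "\<lambda>i. nat (i - d)"])
  qed auto
  also have "\<dots> = (\<Sum>t\<le>j. f $$ (d + int t) * g $$ (a + int (j - t)))"
    by (rule sum.cong) (auto simp: of_nat_diff)
  finally show ?thesis .
qed



lemma reduce_nth: "red 0 = 0 \<Longrightarrow> fls_reduce red f $$ n = red (f $$ n)"
  by transfer auto

locale vr =
  fixes \<nu> :: "'a::field \<Rightarrow> int" and red :: "'a \<Rightarrow> 'b::field"
  assumes val: "discrete_valuation \<nu>" and res: "residue_map \<nu> red"
begin

abbreviation "Ov \<equiv> val_ring \<nu>"

lemma val_parts:
  "\<forall>x y. x \<noteq> 0 \<longrightarrow> y \<noteq> 0 \<longrightarrow> \<nu> (x * y) = \<nu> x + \<nu> y"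
  "\<forall>x y. x \<noteq> 0 \<longrightarrow> y \<noteq> 0 \<longrightarrow> x + y \<noteq> 0 \<longrightarrow> \<nu> (x + y) \<ge> min (\<nu> x) (\<nu> y)"
  using val unfolding discrete_valuation_def by auto
lemma vmult: "x \<noteq> 0 \<Longrightarrow> y \<noteq> 0 \<Longrightarrow> \<nu> (x * y) = \<nu> x + \<nu> y"
  using val_parts(1) by blast
lemma vadd: "x \<noteq> 0 \<Longrightarrow> y \<noteq> 0 \<Longrightarrow> x + y \<noteq> 0 \<Longrightarrow> \<nu> (x + y) \<ge> min (\<nu> x) (\<nu> y)"
  using val_parts(2) by blast

lemma v1: "\<nu> 1 = 0" using vmult[of 1 1] by simp
lemma vm1: "\<nu> (-1) = 0" using vmult[of "-1" "-1"] v1 by simp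

lemma O0: "0 \<in> Ov" and O1: "1 \<in> Ov" by (auto simp: val_ring_def v1)

lemma Oadd: "x \<in> Ov \<Longrightarrow> y \<in> Ov \<Longrightarrow> x + y \<in> Ov"
proof -
  assume x: "x \<in> Ov" and y: "y \<in> Ov"
  show ?thesis
  proof (cases "x = 0 \<or> y = 0 \<or> x + y = 0")
    case True thus ?thesis using x y by (auto simp: val_ring_def)
  next
    case False
    hence "\<nu> (x + y) \<ge> min (\<nu> x) (\<nu> y)" using vadd by blast
    moreover have "\<nu> x \<ge> 0" "\<nu> y \<ge> 0" using x y False by (auto simp: val_ring_def)
    ultimately have "\<nu> (x + y) \<ge> 0" by linarith
    thus ?thesis by (simp add: val_ring_def)
  qed
qed
lemma Omult: "x \<in> Ov \<Longrightarrow> y \<in> Ov \<Longrightarrow> x * y \<in> Ov"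
proof -
  assume x: "x \<in> Ov" and y: "y \<in> Ov"
  show ?thesis
  proof (cases "x = 0 \<or> y = 0")
    case True thus ?thesis by (auto simp: val_ring_def)
  next
    case False
    hence "\<nu> (x * y) = \<nu> x + \<nu> y" using vmult by blast
    moreover have "\<nu> x \<ge> 0" "\<nu> y \<ge> 0" using x y False by (auto simp: val_ring_def)
    ultimately show ?thesis by (simp add: val_ring_def)
  qed
qed
lemma Ouminus: "x \<in> Ov \<Longrightarrow> - x \<in> Ov"
proof -
  assume x: "x \<in> Ov"
  have m1: "-1 \<in> Ov" using vm1 by (simp add: val_ring_def)
  show ?thesis using Omult[OF m1 x] by simp
qed
lemma Odiff: "x \<in> Ov \<Longrightarrow> y \<in> Ov \<Longrightarrow> x - y \<in> Ov"
  using Oadd[OF _ Ouminus, of x y] by simp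
lemma Osum: "(\<And>i. i \<in> S \<Longrightarrow> f i \<in> Ov) \<Longrightarrow> sum f S \<in> Ov"
  by (induction S rule: infinite_finite_induct) (auto simp: O0 Oadd)
lemma Odiv_unit: "x \<in> Ov \<Longrightarrow> u \<noteq> 0 \<Longrightarrow> \<nu> u = 0 \<Longrightarrow> x / u \<in> Ov"
proof -
  assume x: "x \<in> Ov" and u: "u \<noteq> 0" "\<nu> u = 0"
  show ?thesis
  proof (cases "x = 0")
    case False
    have "\<nu> (x / u * u) = \<nu> (x / u) + \<nu> u" using False u by (intro vmult) auto
    thus ?thesis using x u False by (simp add: val_ring_def)
  qed (simp add: O0)
qed

lemma res_parts:
  "\<forall>x\<in>Ov. \<forall>y\<in>Ov. red (x + y) = red x + red y \<and> red (x * y) = red x * red y"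
  "red 1 = 1"
  "\<forall>x\<in>Ov. red x = 0 \<longleftrightarrow> (x = 0 \<or> \<nu> x > 0)"
  using res unfolding residue_map_def by auto
lemma rhom: "x \<in> Ov \<Longrightarrow> y \<in> Ov \<Longrightarrow> red (x + y) = red x + red y \<and> red (x * y) = red x * red y"
  using res_parts(1) by blast
lemma r1: "red 1 = 1" by (rule res_parts(2))
lemma rker: "x \<in> Ov \<Longrightarrow> red x = 0 \<longleftrightarrow> (x = 0 \<or> \<nu> x > 0)"
  using res_parts(3) by blast
lemma r0: "red 0 = 0" using rker[OF O0] by simp
lemma radd: "x \<in> Ov \<Longrightarrow> y \<in> Ov \<Longrightarrow> red (x + y) = red x + red y" using rhom by blast
lemma rmult: "x \<in> Ov \<Longrightarrow> y \<in> Ov \<Longrightarrow> red (x * y) = red x * red y" using rhom by blast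
lemma ruminus: "x \<in> Ov \<Longrightarrow> red (- x) = - red x"
proof -
  assume x: "x \<in> Ov"
  have "red x + red (- x) = 0" using radd[OF x Ouminus[OF x]] r0 by simp
  thus ?thesis by (metis neg_eq_iff_add_eq_0)
qed
lemma rdiff: "x \<in> Ov \<Longrightarrow> y \<in> Ov \<Longrightarrow> red (x - y) = red x - red y"
  using radd[OF _ Ouminus, of x y] ruminus[of y] by simp
lemma rsum: "(\<And>i. i \<in> S \<Longrightarrow> f i \<in> Ov) \<Longrightarrow> red (sum f S) = (\<Sum>i\<in>S. red (f i))"
proof (induction S rule: infinite_finite_induct)
  case (insert x F)
  thus ?case using radd[of "f x" "sum f F"] Osum[of F f] by simp
qed (auto simp: r0)

abbreviation "over \<equiv> fls_over Ov"
abbreviation "rd \<equiv> fls_reduce red"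

lemma rd_nth: "rd f $$ n = red (f $$ n)" using reduce_nth r0 by blast

lemma over_add: "over f \<Longrightarrow> over g \<Longrightarrow> over (f + g)"
  by (simp add: fls_over_def Oadd)
lemma over_diff: "over f \<Longrightarrow> over g \<Longrightarrow> over (f - g)"
  by (simp add: fls_over_def Odiff)
lemma over_floor: "over f \<Longrightarrow> over (fls_floor f)"
  by (simp add: fls_over_def floor_nth O0)
lemma over_mult: "over f \<Longrightarrow> over g \<Longrightarrow> over (f * g)"
  unfolding fls_over_def
  by (subst fls_times_nth(2)) (auto intro!: Osum Omult)
lemma over_one: "over 1"
  by (auto simp: fls_over_def O0 O1)

lemma rd_add: "over f \<Longrightarrow> over g \<Longrightarrow> rd (f + g) = rd f + rd g"
  by (rule fls_eqI) (simp add: rd_nth fls_over_def radd)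
lemma rd_diff: "over f \<Longrightarrow> over g \<Longrightarrow> rd (f - g) = rd f - rd g"
  by (rule fls_eqI) (simp add: rd_nth fls_over_def rdiff)
lemma rd_floor: "rd (fls_floor f) = fls_floor (rd f)"
  by (rule fls_eqI) (simp add: rd_nth floor_nth r0)
lemma rd_one: "rd 1 = 1"
  by (rule fls_eqI) (simp add: rd_nth r0 r1)
lemma rd_mult:
  assumes f: "over f" and g: "over g" shows "rd (f * g) = rd f * rd g"
proof (rule fls_eqI)
  fix n
  have fa: "\<forall>i<fls_subdegree f. rd f $$ i = 0" by (simp add: rd_nth r0)
  have gb: "\<forall>i<fls_subdegree g. rd g $$ i = 0" by (simp add: rd_nth r0)
  have "rd (f * g) $$ n = red (\<Sum>i=fls_subdegree f..n - fls_subdegree g. f $$ i * g $$ (n - i))"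
    by (simp add: rd_nth fls_times_nth(2))
  also have "\<dots> = (\<Sum>i=fls_subdegree f..n - fls_subdegree g. rd f $$ i * rd g $$ (n - i))"
    using f g by (subst rsum) (auto simp: fls_over_def Omult rmult rd_nth)
  also have "\<dots> = (rd f * rd g) $$ n" by (rule times_nth_gen[OF fa gb, symmetric])
  finally show "rd (f * g) $$ n = (rd f * rd g) $$ n" .
qed

lemma rd_inverse:
  assumes f: "over f" and fi: "over (inverse f)" shows "rd (inverse f) = inverse (rd f)"
proof (cases "f = 0")
  case True
  have "rd 0 = 0" by (rule fls_eqI) (simp add: rd_nth r0)
  thus ?thesis using True by simp
next
  case False
  have "rd f * rd (inverse f) = 1" using rd_mult[OF f fi] False rd_one by simp
  thus ?thesis by (rule inverse_unique[symmetric])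
qed

lemma rd_emb: "(\<forall>i. coeff p i \<in> Ov) \<Longrightarrow> rd (emb p) = emb (map_poly red p)"
  by (rule fls_eqI) (simp add: rd_nth emb_nth coeff_map_poly r0)

lemma unit_inv_O: "u \<noteq> 0 \<Longrightarrow> \<nu> u = 0 \<Longrightarrow> inverse u \<in> Ov"
  using Odiv_unit[OF O1] by (simp add: divide_inverse)

end


context vr begin

lemma over_from_nat:
  assumes "\<forall>i<a. g $$ i = 0" "\<forall>j. g $$ (a + int j) \<in> Ov" shows "over g"
  unfolding fls_over_def
proof
  fix n
  show "g $$ n \<in> Ov"
  proof (cases "n < a")
    case True thus ?thesis using assms(1) O0 by simp
  next
    case False
    hence "n = a + int (nat (n - a))" by simp
    thus ?thesis using assms(2) by metis
  qed
qed

lemma Ounit: "x \<in> Ov \<Longrightarrow> y \<in> Ov \<Longrightarrow> u \<noteq> 0 \<Longrightarrow> \<nu> u = 0 \<Longrightarrow> u * z = x - y \<Longrightarrow> z \<in> Ov"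
proof -
  assume "x \<in> Ov" "y \<in> Ov" "u \<noteq> 0" "\<nu> u = 0" "u * z = x - y"
  hence "z = (x - y) / u" by (simp add: field_simps)
  thus ?thesis using Odiv_unit[OF Odiff] \<open>x \<in> Ov\<close> \<open>y \<in> Ov\<close> \<open>u \<noteq> 0\<close> \<open>\<nu> u = 0\<close> by simp
qed

lemma inv_over:
  assumes f: "over f" and fz: "f \<noteq> 0" and u: "\<nu> (f $$ fls_subdegree f) = 0"
  shows "over (inverse f)"
proof -
  define d where "d = fls_subdegree f"
  define g where "g = inverse f"
  define a where "a = - d"
  have fd: "f $$ d \<noteq> 0" using fz by (simp add: d_def)
  have fa: "\<forall>i<d. f $$ i = 0" by (simp add: d_def)
  have ga: "\<forall>i<a. g $$ i = 0" by (simp add: a_def d_def g_def)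
  have fg: "f * g = 1" using fz by (simp add: g_def)
  have fO: "f $$ i \<in> Ov" for i using f by (simp add: fls_over_def)
  have "g $$ (a + int j) \<in> Ov" for j
  proof (induction j rule: less_induct)
    case (less j)
    have e: "(f * g) $$ (d + a + int j) = (\<Sum>t\<le>j. f $$ (d + int t) * g $$ (a + int (j - t)))"
      by (rule times_nth_nat[OF fa ga])
    show ?case
    proof (cases j)
      case 0
      hence "f $$ d * g $$ a = 1" using e fg by (simp add: a_def)
      hence "f $$ d * g $$ (a + int j) = 1 - 0" using 0 by simp
      thus ?thesis using Ounit[OF O1 O0 fd] u d_def by blast
    next
      case (Suc j')
      define R where "R = (\<Sum>t\<le>j'. f $$ (d + int (Suc t)) * g $$ (a + int (j - Suc t)))"
      have "(f * g) $$ (d + a + int j) = f $$ d * g $$ (a + int j) + R"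
        unfolding e R_def by (simp only: Suc sum.atMost_Suc_shift) simp
      moreover have "(f * g) $$ (d + a + int j) = 0" using fg Suc by (simp add: a_def)
      ultimately have "f $$ d * g $$ (a + int j) = 0 - R" by (simp add: eq_neg_iff_add_eq_0)
      moreover have "R \<in> Ov" unfolding R_def
        by (rule Osum, rule Omult[OF fO less.IH]) (auto simp: Suc)
      ultimately show ?thesis using Ounit[OF O0 _ fd] u d_def by blast
    qed
  qed
  thus ?thesis unfolding g_def[symmetric] by (intro over_from_nat[OF ga]) auto
qed

end


context vr begin

lemma two_unit: "(2::'b) \<noteq> 0 \<Longrightarrow> \<nu> 2 = 0 \<and> (2::'a) \<noteq> 0 \<and> 2 \<in> Ov"
proof -
  assume t: "(2::'b) \<noteq> 0"
  have O2: "(2::'a) \<in> Ov" using Oadd[OF O1 O1] by (simp add: one_add_one)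
  have r2: "red 2 = 2" using radd[OF O1 O1] r1 by (simp add: one_add_one)
  hence "red 2 \<noteq> 0" using t by simp
  hence "(2::'a) \<noteq> 0 \<and> \<not> \<nu> 2 > 0" using rker[OF O2] by blast
  moreover have "\<nu> 2 \<ge> 0" using O2 calculation by (simp add: val_ring_def)
  ultimately show ?thesis using O2 by simp
qed

lemma sqrt_over:
  fixes D :: "'a poly" and s :: "'a fls"
  assumes DO: "\<forall>i. coeff D i \<in> Ov" and deg: "degree D = 4" and lc: "\<nu> (lead_coeff D) = 0"
    and sq: "s^2 = emb D" and t2: "(2::'b) \<noteq> 0"
  shows "over s"
proof -
  have Dnz: "D \<noteq> 0" using deg by auto
  have snz: "s \<noteq> 0" using sq Dnz by auto
  have "fls_subdegree (s^2) = -4" using sq Dnz by (simp add: emb_subdegree deg)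
  hence ssub: "fls_subdegree s = -2" by (simp add: fls_subdegree_pow)
  define d :: int where "d = -2"
  have sa: "\<forall>i<d. s $$ i = 0" using ssub by (simp add: d_def)
  have sdnz: "s $$ d \<noteq> 0" using snz ssub d_def nth_fls_subdegree_nonzero by fastforce
  have ss: "s * s = emb D" using sq by (simp add: power2_eq_square)
  have eO: "(s * s) $$ n \<in> Ov" for n using ss DO O0 by (simp add: emb_nth)
  have e: "(s * s) $$ (d + d + int j) = (\<Sum>t\<le>j. s $$ (d + int t) * s $$ (d + int (j - t)))" for j
    by (rule times_nth_nat[OF sa sa])
  have "s $$ d * s $$ d = lead_coeff D" using e[of 0] ss by (simp add: emb_nth d_def deg)
  hence "\<nu> (s $$ d) + \<nu> (s $$ d) = 0" using vmult[OF sdnz sdnz] lc by simp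
  hence vd: "\<nu> (s $$ d) = 0" by simp
  have sdO: "s $$ d \<in> Ov" using vd by (simp add: val_ring_def)
  have tu: "\<nu> 2 = 0" "(2::'a) \<noteq> 0" using two_unit[OF t2] by auto
  have u: "2 * s $$ d \<noteq> 0" "\<nu> (2 * s $$ d) = 0" using tu sdnz vd vmult[of 2 "s $$ d"] by auto
  have "s $$ (d + int j) \<in> Ov" for j
  proof (induction j rule: less_induct)
    case (less j)
    show ?case
    proof (cases j)
      case 0 thus ?thesis using sdO by simp
    next
      case (Suc j')
      define T where "T t = s $$ (d + int t) * s $$ (d + int (j - t))" for t
      define M where "M = (\<Sum>t<j'. T (Suc t))"
      have "(\<Sum>t\<le>j. T t) = T 0 + (\<Sum>t\<le>j'. T (Suc t))" by (simp only: Suc sum.atMost_Suc_shift)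
      also have "(\<Sum>t\<le>j'. T (Suc t)) = M + T (Suc j')"
        unfolding M_def lessThan_Suc_atMost[symmetric] by (rule sum.lessThan_Suc)
      finally have "(\<Sum>t\<le>j. T t) = 2 * s $$ d * s $$ (d + int j) + M"
        by (simp add: T_def Suc algebra_simps)
      hence "2 * s $$ d * s $$ (d + int j) = (s * s) $$ (d + d + int j) - M"
        using e[of j] by (simp add: T_def)
      moreover have "M \<in> Ov" unfolding M_def T_def
        by (rule Osum, rule Omult; rule less.IH) (auto simp: Suc)
      ultimately show ?thesis using Ounit[OF eO _ u] by blast
    qed
  qed
  thus ?thesis by (intro over_from_nat[OF sa]) auto
qed

end


theorem mainTheorem16:
  fixes \<nu> :: "'a::field \<Rightarrow> int" and red :: "'a \<Rightarrow> 'b::field"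
    and D :: "'a poly" and s :: "'a fls"
  assumes val: "discrete_valuation \<nu>"
    and res: "residue_map \<nu> red"
    and char_k: "(2::'b) \<noteq> 0"
    and D_coeffs: "\<forall>i. coeff D i \<in> val_ring \<nu>"
    and D_deg: "degree D = 4"
    and lc_unit: "\<nu> (lead_coeff D) = 0"
    and lc_square: "\<exists>c. c ^ 2 = lead_coeff D"
    and s_sqrt: "s ^ 2 = poly_to_fls_Xinv D"
    and not_periodic: "\<not> cf_periodic s"
    and red_not_square: "\<not> (\<exists>q. map_poly red D = q ^ 2)"
  shows "(\<exists>n\<ge>1. \<not> fls_over (val_ring \<nu>) (cf_alpha s n))
         \<longleftrightarrow> cf_periodic (fls_reduce red s)"
proof -
  interpret vr \<nu> red using val res by unfold_locales
  have tu: "\<nu> 2 = 0" "(2::'a) \<noteq> 0" using two_unit[OF char_k] by auto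
  have sO: "over s" by (rule sqrt_over[OF D_coeffs D_deg lc_unit s_sqrt char_k])
  define Db where "Db = map_poly red D"
  define sb where "sb = rd s"
  have cDb: "coeff Db i = red (coeff D i)" for i by (simp add: Db_def coeff_map_poly r0)
  have sbsq: "sb ^ 2 = emb Db"
  proof -
    have "sb ^ 2 = rd (s * s)" by (simp add: sb_def power2_eq_square rd_mult[OF sO sO])
    also have "\<dots> = emb Db" using s_sqrt D_coeffs by (simp add: power2_eq_square rd_emb Db_def)
    finally show ?thesis .
  qed
  have "D \<noteq> 0" using D_deg by auto
  hence lcnz: "lead_coeff D \<noteq> 0" by simp
  have "red (lead_coeff D) \<noteq> 0" using rker[OF D_coeffs[rule_format]] lcnz lc_unit by auto
  hence c4: "coeff Db 4 \<noteq> 0" using D_deg cDb by simp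
  have "\<forall>i>4. coeff Db i = 0" using cDb D_deg r0 by (simp add: coeff_eq_0)
  hence "degree Db \<le> 4" by (simp add: degree_le)
  moreover have "4 \<le> degree Db" using c4 by (rule le_degree)
  ultimately have degDb: "degree Db = 4" by simp
  have Knsq: "\<not> (\<exists>q. D = q ^ 2)"
  proof
    assume "\<exists>q. D = q ^ 2"
    then obtain q where q: "D = q ^ 2" by blast
    have "(s - emb q) * (s + emb q) = 0"
      using s_sqrt q by (simp add: emb_mult power2_eq_square algebra_simps)
    hence "s = emb q \<or> s = emb (- q)" by (auto simp: emb_uminus eq_neg_iff_add_eq_0)
    then obtain q' where q': "s = emb q'" by blast
    have qO: "\<forall>i. coeff q' i \<in> Ov"
    proof
      fix i
      have "s $$ (- int i) = coeff q' i" using q' by (simp add: emb_nth)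
      thus "coeff q' i \<in> Ov" using sO by (metis fls_over_def)
    qed
    have "emb Db = emb ((map_poly red q') ^ 2)"
      using sbsq by (simp add: sb_def q' rd_emb[OF qO] emb_power)
    hence "Db = (map_poly red q') ^ 2" by (rule emb_inj)
    thus False using red_not_square unfolding Db_def by blast
  qed
  interpret K: sqcf D s using tu(2) s_sqrt D_deg Knsq by unfold_locales
  interpret k: sqcf Db sb using char_k sbsq degDb red_not_square Db_def by unfold_locales auto
  have comm: "(\<forall>i\<le>j. over (cf_alpha s i)) \<Longrightarrow> rd (cf_alpha s j) = cf_alpha sb j" for j
  proof (induction j)
    case 0 thus ?case by (simp add: sb_def)
  next
    case (Suc j)
    define f where "f = cf_alpha s j - fls_floor (cf_alpha s j)"
    have oj: "over (cf_alpha s j)" using Suc.prems by simp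
    have of: "over f" unfolding f_def by (rule over_diff[OF oj over_floor[OF oj]])
    have "over (cf_alpha s (Suc j))" using Suc.prems by blast
    hence oi: "over (inverse f)" by (simp add: f_def)
    have "rd (cf_alpha s (Suc j)) = rd (inverse f)" by (simp add: f_def)
    also have "\<dots> = inverse (rd f)" by (rule rd_inverse[OF of oi])
    also have "rd f = cf_alpha sb j - fls_floor (cf_alpha sb j)"
      unfolding f_def using Suc by (simp add: rd_diff[OF oj over_floor[OF oj]] rd_floor)
    finally show ?case by simp
  qed
  have Ksub: "n \<ge> 1 \<Longrightarrow> fls_subdegree (cf_alpha s n) = -1" for n
    using K.periodic_iff not_periodic K.alpha_props[of n] by force
  show ?thesis
  proof
    assume "\<exists>n\<ge>1. \<not> over (cf_alpha s n)"
    then obtain n0 where n0: "n0 \<ge> 1 \<and> \<not> over (cf_alpha s n0)"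
      and nmin: "\<And>m. m < n0 \<Longrightarrow> \<not> (m \<ge> 1 \<and> \<not> over (cf_alpha s m))"
      using exists_least_iff[of "\<lambda>n. n \<ge> 1 \<and> \<not> over (cf_alpha s n)"] by blast
    have allO: "i < n0 \<Longrightarrow> over (cf_alpha s i)" for i
      using nmin[of i] sO by (cases i) auto
    obtain m where m: "n0 = Suc m" using n0 by (cases n0) auto
    define f where "f = cf_alpha s m - fls_floor (cf_alpha s m)"
    have oj: "over (cf_alpha s m)" using allO m by simp
    have of: "over f" unfolding f_def by (rule over_diff[OF oj over_floor[OF oj]])
    have ninv: "\<not> over (inverse f)" using n0 m by (simp add: f_def)
    have fnz: "f \<noteq> 0" using K.frac_nz unfolding f_def by blast
    have "fls_subdegree (inverse f) = -1" using Ksub[of n0] n0 m by (simp add: f_def)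
    hence fsub: "fls_subdegree f = 1" by simp
    have f1: "f $$ 1 \<noteq> 0" using fnz fsub nth_fls_subdegree_nonzero by fastforce
    have "\<nu> (f $$ 1) \<noteq> 0" using inv_over[OF of fnz] ninv fsub by auto
    moreover have "f $$ 1 \<in> Ov" using of by (simp add: fls_over_def)
    ultimately have rf1: "red (f $$ 1) = 0" using rker f1 by (simp add: val_ring_def)
    have rdf: "rd f = cf_alpha sb m - fls_floor (cf_alpha sb m)"
      unfolding f_def using comm[of m] allO m
      by (simp add: rd_diff[OF oj over_floor[OF oj]] rd_floor)
    have Fnz: "rd f \<noteq> 0" using k.frac_nz rdf by simp
    have "\<forall>k<2. rd f $$ k = 0"
    proof (intro allI impI)
      fix k :: int assume "k < 2"
      hence "k < 1 \<or> k = 1" by auto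
      thus "rd f $$ k = 0" using rf1 fsub by (auto simp: rd_nth r0)
    qed
    hence "fls_subdegree (rd f) \<ge> 2" using fls_subdegree_geI[OF Fnz] by blast
    moreover have "cf_alpha sb n0 = inverse (rd f)" using rdf m by simp
    ultimately have "fls_subdegree (cf_alpha sb n0) \<le> -2" by simp
    thus "cf_periodic (rd s)" using k.big_periodic n0 sb_def by blast
  next
    assume per: "cf_periodic (rd s)"
    show "\<exists>n\<ge>1. \<not> over (cf_alpha s n)"
    proof (rule ccontr)
      assume "\<not> (\<exists>n\<ge>1. \<not> over (cf_alpha s n))"
      hence allO: "over (cf_alpha s i)" for i using sO by (cases i) auto
      obtain n where n: "n \<ge> 1" "fls_subdegree (cf_alpha sb n) \<le> -2"
        using k.periodic_big per sb_def by blast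
      define k0 where "k0 = fls_subdegree (cf_alpha sb n)"
      have "cf_alpha sb n $$ k0 \<noteq> 0" using k.alpha_lead[OF n(1)] k0_def by simp
      moreover have "cf_alpha sb n $$ k0 = red (cf_alpha s n $$ k0)"
        using comm[of n] allO rd_nth[of "cf_alpha s n" k0] by simp
      moreover have "cf_alpha s n $$ k0 = 0" using Ksub[OF n(1)] n(2) k0_def by simp
      ultimately show False using r0 by simp
    qed
  qed
qed


end
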